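(* Let $q$ be an odd prime power and $h=(h_1,\dots,h_k)$ a $k$-tuple of pairwise distinct polynomials in $\mathbb{F}_q[T]$. For every monic irreducible $P$, $\delta_{q,h}(P)=0$ if and only if $\mathcal{A}_{q,h}(P^\nu)=\emptyset$ for some $\nu\ge1$. Moreover, the product $\mathfrak{S}_{q,h}$ converges, and $\mathfrak{S}_{q,h}=0$ if and only if there exists a monic irreducible $P$ with $\mathcal{A}_{q,h}(P^\nu)=\emptyset$ for some $\nu\ge1$.
   Context: $|P|=q^{\deg P}$. $\mathcal{A}_q(P^\nu)=\{A^2+TB^2\bmod P^\nu:A,B\in\mathbb{F}_q[T]\}$, $\mathcal{A}_{q,h}(P^\nu)=\{f\bmod P^\nu:f+h_i\in\mathcal{A}_q(P^\nu)\ \forall i\}$, $\delta_{q,h}(P)=\lim_{\nu\to\infty}|P|^{-\nu}\#\mathcal{A}_{q,h}(P^\nu)$, $\delta_{q,0}(P)$ the same for the $1$-tuple $(0)$, and $\mathfrak{S}_{q,h}=\prod_P\delta_{q,h}(P)/\delta_{q,0}(P)^k$ over all monic irreducible $P$. *)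

theory Defs
  imports "HOL-Analysis.Analysis" "HOL-Computational_Algebra.Computational_Algebra"
begin

text \<open>Throughout, the finite field F_q is modelled by a type 'a of class field and finite;
  q = CARD('a). The variable T is the polynomial [:0, 1:]. Residue classes modulo a nonzero
  polynomial M are represented by their canonical representatives f with f mod M = f.\<close>

definition monic_irred :: "'a::field poly \<Rightarrow> bool" where
  "monic_irred P \<longleftrightarrow> lead_coeff P = 1 \<and> irreducible P"

definition sq_form_set :: "'a::field poly \<Rightarrow> 'a poly set" where
  "sq_form_set M = {(A\<^sup>2 + [:0, 1:] * B\<^sup>2) mod M | A B. True}"

definition sq_form_tuple_set :: "'a::field poly list \<Rightarrow> 'a poly \<Rightarrow> 'a poly set" where
  "sq_form_tuple_set h M = {f. f mod M = f \<and> (\<forall>i<length h. (f + h ! i) mod M \<in> sq_form_set M)}"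

definition local_density :: "'a::{field,finite} poly list \<Rightarrow> 'a poly \<Rightarrow> real" where
  "local_density h P =
     lim (\<lambda>\<nu>. real (card (sq_form_tuple_set h (P ^ \<nu>))) / real (CARD('a)) ^ (degree P * \<nu>))"

definition local_factor :: "'a::{field,finite} poly list \<Rightarrow> 'a poly \<Rightarrow> real" where
  "local_factor h P = local_density h P / local_density [0] P ^ length h"

text \<open>The product over all monic irreducible P, ordered by degree: the n-th factor of the
  infinite product is the (finite) product of the local factors over the monic irreducible P
  of degree n.\<close>
definition degree_factor :: "'a::{field,finite} poly list \<Rightarrow> nat \<Rightarrow> real" where
  "degree_factor h n = (\<Prod>P \<in> {P. monic_irred P \<and> degree P = n}. local_factor h P)"

definition singular_series :: "'a::{field,finite} poly list \<Rightarrow> real" where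
  "singular_series h = prodinf (degree_factor h)"

end

theory Submission
  imports Defs
begin


lemma inv_even:
  assumes "finite S" "\<forall>x\<in>S. g x \<in> S \<and> g x \<noteq> x \<and> g (g x) = x"
  shows "even (card S)"
  using assms
proof (induction "card S" arbitrary: S rule: less_induct)
  case less
  show ?case
  proof (cases "S = {}")
    case True thus ?thesis by simp
  next
    case False
    then obtain x where x: "x \<in> S" by auto
    define S' where "S' = S - {x, g x}"
    have gx: "g x \<in> S" "g x \<noteq> x" using less.prems x by auto
    have cS: "card S = Suc (Suc (card S'))"
    proof -
      have "card S' = card S - card {x, g x}" unfolding S'_def
        using less.prems(1) x gx by (intro card_Diff_subset) auto
      moreover have "card {x, g x} = 2" using gx by simp
      moreover have "card S \<ge> 2"
      proof -
        have "card {x, g x} \<le> card S" using less.prems(1) x gx by (intro card_mono) auto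
        thus ?thesis using gx by simp
      qed
      ultimately show ?thesis by simp
    qed
    have "\<forall>y\<in>S'. g y \<in> S' \<and> g y \<noteq> y \<and> g (g y) = y"
    proof
      fix y assume y: "y \<in> S'"
      hence yS: "y \<in> S" "y \<noteq> x" "y \<noteq> g x" by (auto simp: S'_def)
      have "g y \<noteq> x" using yS less.prems(2) by metis
      moreover have "g y \<noteq> g x" using yS less.prems(2) x by metis
      ultimately show "g y \<in> S' \<and> g y \<noteq> y \<and> g (g y) = y"
        using yS less.prems(2) by (auto simp: S'_def)
    qed
    moreover have "finite S'" using less.prems(1) by (simp add: S'_def)
    ultimately have "even (card S')" using less.hyps cS by auto
    thus ?thesis using cS by simp
  qed
qed

lemma two_nz: assumes "odd CARD('a::{field,finite})" shows "(2::'a) \<noteq> 0"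
proof
  assume two: "(2::'a) = 0"
  have "\<forall>x\<in>(UNIV::'a set). x + 1 \<in> UNIV \<and> x + 1 \<noteq> x \<and> x + 1 + 1 = x"
  proof
    fix x :: 'a
    have "x + 1 + 1 = x + 2" by (simp add: add.assoc one_add_one)
    thus "x + 1 \<in> UNIV \<and> x + 1 \<noteq> x \<and> x + 1 + 1 = x" using two by simp
  qed
  hence "even (card (UNIV::'a set))" by (intro inv_even[where g="\<lambda>x. x + 1"]) auto
  thus False using assms by simp
qed

definition Rs :: "nat \<Rightarrow> 'a::zero poly set" where "Rs n = {p. \<forall>i\<ge>n. coeff p i = 0}"

lemma Rs_card: "finite (Rs n :: 'a::{zero,finite} poly set) \<and> card (Rs n :: 'a poly set) = CARD('a)^n"
proof (induction n)
  case 0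
  have "Rs 0 = {0::'a poly}" by (auto simp: Rs_def poly_eq_iff)
  then show ?case by simp
next
  case (Suc n)
  have eq: "Rs (Suc n) = (\<lambda>(a,p). pCons a p) ` (UNIV \<times> (Rs n :: 'a poly set))"
  proof
    show "Rs (Suc n) \<subseteq> (\<lambda>(a,p). pCons a p) ` (UNIV \<times> (Rs n :: 'a poly set))"
    proof
      fix p :: "'a poly" assume p: "p \<in> Rs (Suc n)"
      obtain a q where pq: "p = pCons a q" by (cases p)
      have "q \<in> Rs n" unfolding Rs_def
      proof (intro CollectI allI impI)
        fix i assume "n \<le> i"
        hence "coeff p (Suc i) = 0" using p by (auto simp: Rs_def)
        thus "coeff q i = 0" using pq by simp
      qed
      thus "p \<in> (\<lambda>(a,p). pCons a p) ` (UNIV \<times> (Rs n :: 'a poly set))" using pq by auto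
    qed
  next
    show "(\<lambda>(a,p). pCons a p) ` (UNIV \<times> (Rs n :: 'a poly set)) \<subseteq> Rs (Suc n)"
    proof clarify
      fix a :: 'a and q :: "'a poly" assume q: "q \<in> Rs n"
      show "pCons a q \<in> Rs (Suc n)" unfolding Rs_def
      proof (intro CollectI allI impI)
        fix i assume "Suc n \<le> i"
        then obtain j where "i = Suc j" "n \<le> j" by (cases i) auto
        thus "coeff (pCons a q) i = 0" using q by (simp add: Rs_def)
      qed
    qed
  qed
  have inj: "inj_on (\<lambda>(a,p). pCons a p) (UNIV \<times> (Rs n :: 'a poly set))"
    by (auto simp: inj_on_def)
  show ?case using Suc eq card_image[OF inj] by (simp add: card_cartesian_product)
qed

lemma mem_Rs: "p \<in> Rs n \<longleftrightarrow> p = 0 \<or> degree p < n"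
proof
  assume p: "p \<in> Rs n"
  show "p = 0 \<or> degree p < n"
  proof (rule ccontr)
    assume "\<not> (p = 0 \<or> degree p < n)"
    hence "p \<noteq> 0" "n \<le> degree p" by auto
    hence "coeff p (degree p) = 0" using p by (auto simp: Rs_def)
    thus False using \<open>p \<noteq> 0\<close> by simp
  qed
next
  assume "p = 0 \<or> degree p < n"
  thus "p \<in> Rs n" by (auto simp: Rs_def coeff_eq_0)
qed

definition U :: "'a::field poly \<Rightarrow> 'a poly set" where "U M = {f. f mod M = f}"

lemma U_iff: assumes "M \<noteq> 0" shows "f \<in> U M \<longleftrightarrow> f = 0 \<or> degree f < degree M"
proof
  assume "f \<in> U M"
  hence e: "f mod M = f" by (simp add: U_def)
  show "f = 0 \<or> degree f < degree M"
  proof (cases "f = 0")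
    case False
    hence "f mod M \<noteq> 0" using e by simp
    hence "degree (f mod M) < degree M" using degree_mod_less[OF assms, of f] by blast
    thus ?thesis using e by simp
  qed simp
next
  assume "f = 0 \<or> degree f < degree M"
  thus "f \<in> U M"
  proof
    assume "f = 0" thus ?thesis by (simp add: U_def)
  next
    assume "degree f < degree M" thus ?thesis using mod_poly_less[of f M] by (simp add: U_def)
  qed
qed

lemma U_eq: assumes "M \<noteq> 0" shows "U M = Rs (degree M)"
proof (intro set_eqI)
  fix f show "f \<in> U M \<longleftrightarrow> f \<in> Rs (degree M)" by (simp only: U_iff[OF assms] mem_Rs)
qed

lemma U_card: assumes "(M::'a::{field,finite} poly) \<noteq> 0"
  shows "finite (U M)" "card (U M) = CARD('a) ^ degree M"
  unfolding U_eq[OF assms] using Rs_card[of "degree M", where 'a='a] by simp_all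


lemma sq_mem: "x mod M \<in> sq_form_set M \<longleftrightarrow> (\<exists>A B. M dvd x - (A^2 + [:0,1:]*B^2))"
  by (simp add: sq_form_set_def mod_eq_dvd_iff)

lemma sq_cong: "M dvd x - y \<Longrightarrow> x mod M \<in> sq_form_set M \<longleftrightarrow> y mod M \<in> sq_form_set M"
proof -
  assume "M dvd x - y"
  hence "x mod M = y mod M" by (simp add: mod_eq_dvd_iff)
  thus ?thesis by simp
qed

lemma tuple_sub_U: "sq_form_tuple_set h M \<subseteq> U M"
  by (auto simp: sq_form_tuple_set_def U_def)

lemma tuple_finite: "(M::'a::{field,finite} poly) \<noteq> 0 \<Longrightarrow> finite (sq_form_tuple_set h M)"
  by (rule finite_subset[OF tuple_sub_U U_card(1)])

lemma reduce:
  assumes "M dvd M'" "f \<in> sq_form_tuple_set h M'"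
  shows "f mod M \<in> sq_form_tuple_set h M"
proof -
  have d1: "M dvd (f mod M + h ! i) - (f + h ! i)" for i
  proof -
    have "(f mod M + h ! i) - (f + h ! i) = - (f - f mod M)" by (simp add: algebra_simps)
    also have "\<dots> = M * (- (f div M))" by (simp add: minus_mod_eq_mult_div)
    finally show ?thesis by simp
  qed
  have "(f mod M + h!i) mod M \<in> sq_form_set M" if "i < length h" for i
  proof -
    from assms(2) that have "(f + h!i) mod M' \<in> sq_form_set M'"
      by (auto simp: sq_form_tuple_set_def)
    then obtain A B where "M' dvd (f + h!i) - (A^2 + [:0,1:]*B^2)" by (auto simp: sq_mem)
    hence "M dvd (f + h!i) - (A^2 + [:0,1:]*B^2)" using assms(1) dvd_trans by blast
    hence "M dvd ((f mod M + h!i) - (f + h!i)) + ((f + h!i) - (A^2 + [:0,1:]*B^2))"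
      using d1 by (rule dvd_add[rotated])
    moreover have "((f mod M + h!i) - (f + h!i)) + ((f + h!i) - (A^2 + [:0,1:]*B^2))
      = (f mod M + h!i) - (A^2 + [:0,1:]*B^2)" by (simp add: algebra_simps)
    ultimately have "M dvd (f mod M + h!i) - (A^2 + [:0,1:]*B^2)" by (simp only:)
    thus ?thesis by (auto simp: sq_mem)
  qed
  thus ?thesis by (auto simp: sq_form_tuple_set_def)
qed



lemma mi_props:
  assumes "monic_irred (P::'a::field poly)"
  shows "P \<noteq> 0" "degree P > 0" "prime_elem P" "\<not> is_unit P"
proof -
  show P0: "P \<noteq> 0" using assms by (auto simp: monic_irred_def)
  show nu: "\<not> is_unit P" using assms by (auto simp: monic_irred_def irreducible_def)
  show "degree P > 0" using nu is_unit_iff_degree[OF P0] by auto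
  show "prime_elem P" using assms by (simp add: monic_irred_def field_poly_irreducible_imp_prime)
qed

lemma degree_div_bound:
  fixes f M :: "'a::field poly"
  assumes M0: "M \<noteq> 0" and f: "f = 0 \<or> degree f < degree M + e"
  shows "f div M = 0 \<or> degree (f div M) < e"
proof (cases "f div M = 0")
  case False
  have fe: "f = f div M * M + f mod M" by simp
  have dq: "degree (f div M * M) = degree (f div M) + degree M"
    using False M0 by (simp add: degree_mult_eq)
  have "degree f = degree (f div M * M)"
  proof (cases "f mod M = 0")
    case True thus ?thesis using fe by (metis add.right_neutral)
  next
    case False
    hence "degree (f mod M) < degree M" using degree_mod_less[OF M0, of f] by blast
    hence "degree (f mod M) < degree (f div M * M)" using dq by simp
    thus ?thesis using fe degree_add_eq_left by metis
  qed
  moreover have "f \<noteq> 0" using False by auto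
  ultimately show ?thesis using f dq by simp
qed simp

lemma count_step:
  fixes P :: "'a::{field,finite} poly"
  assumes "monic_irred P"
  shows "card (sq_form_tuple_set h (P ^ Suc \<nu>)) \<le> CARD('a) ^ degree P * card (sq_form_tuple_set h (P ^ \<nu>))"
proof -
  have P0: "P \<noteq> 0" using mi_props[OF assms] by simp
  let ?S1 = "sq_form_tuple_set h (P ^ Suc \<nu>)" and ?S0 = "sq_form_tuple_set h (P ^ \<nu>)"
  let ?phi = "\<lambda>f. (f mod P ^ \<nu>, f div P ^ \<nu>)"
  have inj: "inj_on ?phi ?S1"
  proof (rule inj_onI)
    fix f g assume "?phi f = ?phi g"
    hence "f div P^\<nu> * P^\<nu> + f mod P^\<nu> = g div P^\<nu> * P^\<nu> + g mod P^\<nu>" by simp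
    thus "f = g" by (metis div_mult_mod_eq)
  qed
  have sub: "?phi ` ?S1 \<subseteq> ?S0 \<times> U P"
  proof (rule image_subsetI)
    fix f assume f: "f \<in> ?S1"
    have m: "f mod P ^ \<nu> \<in> ?S0" by (rule reduce[OF _ f]) (simp add: le_imp_power_dvd)
    have "f \<in> U (P ^ Suc \<nu>)" using f tuple_sub_U by blast
    hence "f = 0 \<or> degree f < degree (P^\<nu>) + degree P"
      using U_iff[of "P ^ Suc \<nu>" f] P0 by (simp add: degree_mult_eq degree_power_eq add.commute)
    hence "f div P^\<nu> = 0 \<or> degree (f div P^\<nu>) < degree P"
      using P0 by (intro degree_div_bound) auto
    hence "f div P ^ \<nu> \<in> U P" using U_iff[OF P0] by blast
    thus "?phi f \<in> ?S0 \<times> U P" using m by simp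
  qed
  have fin: "finite (?S0 \<times> U P)" using tuple_finite[of "P^\<nu>" h] U_card(1)[OF P0] P0 by simp
  have "card ?S1 = card (?phi ` ?S1)" using card_image[OF inj] by simp
  also have "\<dots> \<le> card (?S0 \<times> U P)" by (rule card_mono[OF fin sub])
  also have "\<dots> = card ?S0 * CARD('a) ^ degree P" using U_card[OF P0] by (simp add: card_cartesian_product)
  finally show ?thesis by (simp add: mult.commute)
qed

definition rat :: "'a::{field,finite} poly list \<Rightarrow> 'a poly \<Rightarrow> nat \<Rightarrow> real" where
  "rat h P \<nu> = real (card (sq_form_tuple_set h (P ^ \<nu>))) / real (CARD('a)) ^ (degree P * \<nu>)"

lemma local_density_rat: "local_density h P = lim (rat h P)"
  by (simp add: local_density_def rat_def[abs_def])

lemma rat_nonneg: "rat h P \<nu> \<ge> 0" by (simp add: rat_def)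

lemma rat_dec:
  fixes P :: "'a::{field,finite} poly"
  assumes "monic_irred P" shows "decseq (rat h P)"
proof (unfold decseq_Suc_iff, intro allI)
  fix \<nu>
  let ?q = "real (CARD('a))" and ?d = "degree P"
  have qpos: "?q > 0" by simp
  have c: "real (card (sq_form_tuple_set h (P ^ Suc \<nu>))) \<le> ?q ^ ?d * real (card (sq_form_tuple_set h (P ^ \<nu>)))"
    using count_step[OF assms, of h \<nu>] by (metis of_nat_le_iff of_nat_mult of_nat_power)
  have e: "?q ^ (?d * Suc \<nu>) = ?q ^ (?d * \<nu>) * ?q ^ ?d" by (simp add: power_add)
  have "rat h P (Suc \<nu>) = real (card (sq_form_tuple_set h (P ^ Suc \<nu>))) / ?q ^ (?d * Suc \<nu>)"
    by (simp only: rat_def)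
  also have "\<dots> = real (card (sq_form_tuple_set h (P ^ Suc \<nu>))) / (?q ^ (?d * \<nu>) * ?q ^ ?d)"
    by (simp only: e)
  also have "\<dots> \<le> (?q ^ ?d * real (card (sq_form_tuple_set h (P ^ \<nu>)))) / (?q ^ (?d * \<nu>) * ?q ^ ?d)"
    using c qpos by (intro divide_right_mono) auto
  also have "\<dots> = rat h P \<nu>" using qpos by (simp add: rat_def)
  finally show "rat h P (Suc \<nu>) \<le> rat h P \<nu>" .
qed

lemma dens_lim:
  fixes P :: "'a::{field,finite} poly"
  assumes "monic_irred P"
  shows "rat h P \<longlonglongrightarrow> local_density h P" "\<And>\<nu>. local_density h P \<le> rat h P \<nu>"
proof -
  obtain L where L: "rat h P \<longlonglongrightarrow> L" "\<forall>i. L \<le> rat h P i"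
    using decseq_convergent[OF rat_dec[OF assms], of 0] rat_nonneg by blast
  have "local_density h P = L" using L(1) by (simp add: local_density_rat limI)
  thus "rat h P \<longlonglongrightarrow> local_density h P" "\<And>\<nu>. local_density h P \<le> rat h P \<nu>" using L by auto
qed



lemma pow_cancel:
  assumes "prime_elem (P::'a::field poly)" "\<not> P dvd c" "P ^ \<mu> dvd a * c"
  shows "P ^ \<mu> dvd a"
  using assms(3)
proof (induction \<mu> arbitrary: a)
  case 0 thus ?case by simp
next
  case (Suc \<mu>)
  have "P dvd P ^ Suc \<mu>" by (rule dvd_power) simp
  hence "P dvd a * c" using Suc.prems by (rule dvd_trans)
  hence "P dvd a" using assms(1,2) prime_elem_dvd_mult_iff by blast
  then obtain a' where a: "a = P * a'" by (elim dvdE)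
  have P0: "P \<noteq> 0" using assms(1) by auto
  have "P * P ^ \<mu> dvd P * (a' * c)" using Suc.prems a by (simp add: mult.assoc)
  hence "P ^ \<mu> dvd a' * c" using P0 by simp
  hence "P ^ \<mu> dvd a'" by (rule Suc.IH)
  thus ?case using a by simp
qed

lemma inv_mod:
  fixes P :: "'a::{field,finite} poly"
  assumes "prime_elem P" "\<not> P dvd c"
  shows "\<exists>s. P ^ \<mu> dvd s * c - 1"
proof -
  have P0: "P ^ \<mu> \<noteq> 0" using assms(1) by auto
  let ?g = "\<lambda>x. (x * c) mod P ^ \<mu>"
  have inj: "inj_on ?g (U (P ^ \<mu>))"
  proof (rule inj_onI)
    fix x y assume x: "x \<in> U (P ^ \<mu>)" and y: "y \<in> U (P ^ \<mu>)" and e: "?g x = ?g y"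
    hence "P ^ \<mu> dvd x * c - y * c" by (simp add: mod_eq_dvd_iff)
    hence "P ^ \<mu> dvd (x - y) * c" by (simp add: algebra_simps)
    hence "P ^ \<mu> dvd x - y" using pow_cancel assms by blast
    hence "x mod P ^ \<mu> = y mod P ^ \<mu>" by (simp add: mod_eq_dvd_iff)
    thus "x = y" using x y by (simp add: U_def)
  qed
  have sub: "?g ` U (P ^ \<mu>) \<subseteq> U (P ^ \<mu>)" by (auto simp: U_def)
  have eq: "?g ` U (P ^ \<mu>) = U (P ^ \<mu>)" by (rule endo_inj_surj[OF U_card(1)[OF P0] sub inj])
  have "1 mod P ^ \<mu> \<in> U (P ^ \<mu>)" by (simp add: U_def)
  then obtain x where "1 mod P ^ \<mu> = (x * c) mod P ^ \<mu>" using eq by blast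
  hence "(x * c) mod P ^ \<mu> = 1 mod P ^ \<mu>" by simp
  hence "P ^ \<mu> dvd x * c - 1" by (simp add: mod_eq_dvd_iff)
  thus ?thesis by blast
qed

lemma decomp:
  fixes P :: "'a::field poly"
  assumes "degree P > 0" "C \<noteq> 0"
  shows "\<exists>a C1. C = P ^ a * C1 \<and> \<not> P dvd C1"
  using assms(2)
proof (induction "degree C" arbitrary: C rule: less_induct)
  case less
  show ?case
  proof (cases "P dvd C")
    case False thus ?thesis by (intro exI[of _ 0] exI[of _ C]) simp
  next
    case True
    then obtain C' where C: "C = P * C'" by (elim dvdE)
    have C'0: "C' \<noteq> 0" using less.prems C by auto
    have P0: "P \<noteq> 0" using assms(1) by auto
    have "degree C = degree P + degree C'" using C C'0 P0 by (simp add: degree_mult_eq)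
    hence "degree C' < degree C" using assms(1) by simp
    then obtain a C1 where "C' = P ^ a * C1" "\<not> P dvd C1" using less.hyps C'0 by blast
    thus ?thesis using C by (intro exI[of _ "Suc a"] exI[of _ C1]) (simp add: mult.assoc)
  qed
qed

lemma two_ndvd:
  fixes P :: "'a::field poly"
  assumes "(2::'a) \<noteq> 0" "prime_elem P"
  shows "\<not> P dvd 2"
proof
  assume P2: "P dvd 2"
  have "(2::'a poly) * [:inverse 2:] = 1"
  proof -
    have "(2::'a poly) * [:inverse 2:] = [:2:] * [:inverse 2:]" by (simp only: numeral_poly)
    also have "\<dots> = [:2 * inverse 2:]" by simp
    also have "\<dots> = 1" using assms(1) by (simp add: one_pCons)
    finally show ?thesis .
  qed
  have "P dvd (2::'a poly) * [:inverse 2:]" using P2 by (rule dvd_mult2)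
  hence "P dvd 1" using \<open>(2::'a poly) * [:inverse 2:] = 1\<close> by simp
  thus False using assms(2) prime_elem_not_unit by blast
qed

lemma hensel_unit:
  fixes P :: "'a::{field,finite} poly"
  assumes "(2::'a) \<noteq> 0" "prime_elem P" "\<not> P dvd c0" "P dvd u - c0^2"
  shows "\<exists>c. P ^ Suc \<mu> dvd u - c^2 \<and> \<not> P dvd c"
proof (induction \<mu>)
  case 0 thus ?case using assms by (intro exI[of _ c0]) simp
next
  case (Suc \<mu>)
  then obtain c where c: "P ^ Suc \<mu> dvd u - c^2" "\<not> P dvd c" by blast
  define pu where "pu = P ^ \<mu>"
  define pm where "pm = P * pu"
  obtain w where w: "u - c^2 = pm * w" using c(1) by (auto simp: pm_def pu_def elim!: dvdE)
  have "\<not> P dvd 2 * c" using two_ndvd[OF assms(1,2)] c(2) assms(2) prime_elem_dvd_mult_iff by blast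
  then obtain s where "P ^ 1 dvd s * (2 * c) - 1" using inv_mod[OF assms(2)] by blast
  then obtain e where e: "s * (2 * c) - 1 = P * e" by (auto elim!: dvdE)
  define t where "t = s * w"
  have eq: "u - (c + pm * t)^2 = P * pm * (-(w * e) - pu * t^2)"
    using w e unfolding t_def pm_def by algebra
  have pe: "P ^ Suc (Suc \<mu>) = P * pm" by (simp add: pm_def pu_def)
  have "P * pm dvd u - (c + pm * t)^2" unfolding eq by (rule dvd_triv_left)
  hence "P ^ Suc (Suc \<mu>) dvd u - (c + pm * t)^2" by (simp only: pe)
  moreover have "\<not> P dvd c + pm * t"
  proof
    assume "P dvd c + pm * t"
    moreover have "P dvd pm * t" by (simp add: pm_def)
    ultimately have "P dvd (c + pm * t) - pm * t" by (rule dvd_diff)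
    thus False using c(2) by simp
  qed
  ultimately show ?case by blast
qed

lemma sq_lift:
  fixes P :: "'a::{field,finite} poly"
  assumes "(2::'a) \<noteq> 0" "prime_elem P" "degree P > 0" "P ^ n dvd y - C0^2" "\<not> P ^ n dvd C0^2"
  shows "\<exists>C. P ^ \<mu> dvd y - C^2"
proof -
  have C00: "C0 \<noteq> 0" using assms(5) by auto
  obtain a C1 where C: "C0 = P ^ a * C1" "\<not> P dvd C1" using decomp[OF assms(3) C00] by blast
  define pa where "pa = P ^ a"
  have pa2: "P ^ (2*a) = pa^2" by (simp add: pa_def power_even_eq)
  have sq: "C0^2 = pa^2 * C1^2" using C(1) by (simp add: pa_def power_mult_distrib)
  have "2 * a < n"
  proof (rule ccontr)
    assume "\<not> 2 * a < n"
    hence "P ^ n dvd P ^ (2*a)" by (simp add: le_imp_power_dvd)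
    moreover have "P ^ (2*a) dvd C0^2" unfolding sq pa2 by (rule dvd_triv_left)
    ultimately have "P ^ n dvd C0^2" by (rule dvd_trans)
    thus False using assms(5) by simp
  qed
  then obtain e where "n = Suc (2 * a + e)" using less_imp_Suc_add by blast
  hence n: "P ^ n = pa^2 * P ^ Suc e" by (simp add: pa2[symmetric] power_add[symmetric])
  obtain k where k: "y - C0^2 = P ^ n * k" using assms(4) by (elim dvdE)
  hence y: "y = P ^ n * k + C0^2" by (simp add: diff_eq_eq)
  define u where "u = C1^2 + P ^ Suc e * k"
  have yu: "y = pa^2 * u" unfolding y n sq u_def by (simp add: algebra_simps)
  have "P dvd u - C1^2" unfolding u_def by simp
  then obtain c where c: "P ^ Suc \<mu> dvd u - c^2" using hensel_unit[OF assms(1,2) C(2)] by blast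
  have eq: "y - (pa * c)^2 = pa^2 * (u - c^2)"
    unfolding yu by (simp add: algebra_simps power_mult_distrib)
  have "P ^ \<mu> dvd P ^ Suc \<mu>" by (rule le_imp_power_dvd) simp
  also have "\<dots> dvd u - c^2" by (rule c)
  also have "\<dots> dvd pa^2 * (u - c^2)" by (rule dvd_triv_right)
  finally show ?thesis unfolding eq[symmetric] by blast
qed



definition TT :: "'a::comm_ring_1 poly" where "TT = [:0, 1:]"

lemma sq_memT: "x mod M \<in> sq_form_set M \<longleftrightarrow> (\<exists>A B. M dvd x - (A^2 + TT*B^2))"
  by (simp add: sq_mem TT_def)

lemma TT_deg [simp]: "degree (TT::'a::field poly) = 1" by (simp add: TT_def)

lemma TT_nz [simp]: "(TT::'a::field poly) \<noteq> 0" by (simp add: TT_def)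

lemma dvd_T:
  fixes P :: "'a::field poly"
  assumes "monic_irred P" "P dvd TT"
  shows "P = TT"
proof -
  obtain q where q: "TT = P * q" using assms(2) by (elim dvdE)
  have P0: "P \<noteq> 0" and dP: "degree P > 0" using mi_props[OF assms(1)] by auto
  have q0: "q \<noteq> 0" using q TT_nz by auto
  have "degree (P * q) = degree P + degree q" by (rule degree_mult_eq[OF P0 q0])
  hence "degree (TT::'a poly) = degree P + degree q" by (simp only: q)
  moreover have "degree (TT::'a poly) = 1" by (simp add: TT_def)
  ultimately have "degree P + degree q = 1" by simp
  hence dq: "degree q = 0" using dP by simp
  have "lead_coeff (P * q) = lead_coeff P * lead_coeff q" by (rule lead_coeff_mult)
  hence "lead_coeff (TT::'a poly) = lead_coeff P * lead_coeff q" by (simp only: q)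
  moreover have "lead_coeff (TT::'a poly) = 1" by (simp add: TT_def)
  ultimately have "lead_coeff P * lead_coeff q = 1" by simp
  hence "lead_coeff q = 1" using assms(1) by (simp add: monic_irred_def)
  hence "coeff q 0 = 1" using dq by simp
  hence "q = 1" using degree_0_id[OF dq] by (simp add: one_pCons)
  thus ?thesis using q by simp
qed

lemma stable:
  fixes P :: "'a::{field,finite} poly"
  assumes two: "(2::'a) \<noteq> 0" and mi: "monic_irred P"
    and d: "P ^ n dvd z - (A^2 + TT * B^2)"
    and nd: "\<not> P ^ n dvd A^2 \<or> \<not> P ^ n dvd TT * B^2"
  shows "\<exists>A' B'. P ^ \<mu> dvd z - (A'^2 + TT * B'^2)"
proof -
  have pr: "prime_elem P" and dP: "degree P > 0" using mi_props[OF mi] by auto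
  show ?thesis
  proof (cases "\<not> P ^ n dvd A^2")
    case True
    have eq: "z - TT * B^2 - A^2 = z - (A^2 + TT * B^2)" by algebra
    have "P ^ n dvd (z - TT * B^2) - A^2" using d by (simp only: eq)
    then obtain C where C: "P ^ \<mu> dvd (z - TT * B^2) - C^2" using sq_lift[OF two pr dP _ True] by blast
    have "z - (C^2 + TT * B^2) = (z - TT * B^2) - C^2" by (simp add: algebra_simps)
    thus ?thesis using C by metis
  next
    case False
    hence ndB: "\<not> P ^ n dvd TT * B^2" using nd by blast
    show ?thesis
    proof (cases "P dvd TT")
      case True
      hence PT: "P = TT" using dvd_T[OF mi] by blast
      have "n \<noteq> 0" using ndB by (intro notI) simp
      then obtain n' where n: "n = Suc n'" by (cases n) auto
      have "TT dvd P ^ n" unfolding PT n by (rule dvd_power) simp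
      hence "TT dvd z - (A^2 + TT * B^2)" using d by (rule dvd_trans)
      moreover have "TT dvd TT * B^2" by simp
      ultimately have "TT dvd (z - (A^2 + TT * B^2)) + TT * B^2" by (rule dvd_add)
      hence "TT dvd z - A^2" by (simp add: algebra_simps)
      then obtain y where y: "z - A^2 = TT * y" by (elim dvdE)
      have e1: "z - (A^2 + TT * B^2) = TT * (y - B^2)"
        using y by (simp add: algebra_simps)
      have "TT * TT ^ n' dvd TT * (y - B^2)" using d e1 PT n by simp
      hence d': "TT ^ n' dvd y - B^2" using TT_nz by simp
      have nd': "\<not> TT ^ n' dvd B^2"
      proof
        assume "TT ^ n' dvd B^2"
        hence "TT * TT ^ n' dvd TT * B^2" by simp
        thus False using ndB PT n by simp
      qed
      have prT: "prime_elem (TT::'a poly)" using pr PT by simp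
      obtain C where C: "TT ^ \<mu> dvd y - C^2"
        using sq_lift[OF two prT _ d' nd'] by auto
      have "z - (A^2 + TT * C^2) = TT * (y - C^2)" using y by (simp add: algebra_simps)
      moreover have "TT ^ \<mu> dvd TT * (y - C^2)" using C by (rule dvd_mult)
      ultimately show ?thesis using PT by metis
    next
      case False
      have d2: "P ^ n dvd TT * (z - A^2) - (TT * B)^2"
      proof -
        have "TT * (z - A^2) - (TT * B)^2 = TT * (z - (A^2 + TT * B^2))"
          by (simp add: algebra_simps power2_eq_square)
        thus ?thesis using d by (simp add: dvd_mult)
      qed
      have nd2: "\<not> P ^ n dvd (TT * B)^2"
      proof
        assume "P ^ n dvd (TT * B)^2"
        moreover have "(TT * B)^2 = (TT * B^2) * TT" by (simp add: power2_eq_square algebra_simps)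
        ultimately have "P ^ n dvd (TT * B^2) * TT" by simp
        hence "P ^ n dvd TT * B^2" using pow_cancel[OF pr False] by blast
        thus False using ndB by simp
      qed
      obtain C where C: "P ^ \<mu> dvd TT * (z - A^2) - C^2" using sq_lift[OF two pr dP d2 nd2] by blast
      obtain s where s: "P ^ \<mu> dvd s * TT - 1" using inv_mod[OF pr False] by blast
      define pm where "pm = P ^ \<mu>"
      obtain e1 where e1: "s * TT - 1 = pm * e1" using s unfolding pm_def by (elim dvdE)
      obtain e2 where e2: "TT * (z - A^2) - C^2 = pm * e2" using C unfolding pm_def by (elim dvdE)
      have "z - (A^2 + TT * (s * C)^2) = pm * (- (z - A^2) * e1 * (s * TT + 1) + s^2 * TT * e2)"
        using e1 e2 by algebra
      hence "P ^ \<mu> dvd z - (A^2 + TT * (s * C)^2)" unfolding pm_def by simp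
      thus ?thesis by blast
    qed
  qed
qed

lemma good:
  fixes P :: "'a::{field,finite} poly"
  assumes two: "(2::'a) \<noteq> 0" and mi: "monic_irred P"
    and d: "P ^ n dvd z - (A^2 + TT * B^2)" and nz: "\<not> P ^ n dvd z" and z': "P ^ n dvd z' - z"
  shows "z' mod P ^ \<mu> \<in> sq_form_set (P ^ \<mu>)"
proof -
  have nd: "\<not> P ^ n dvd A^2 \<or> \<not> P ^ n dvd TT * B^2"
  proof (rule ccontr)
    assume "\<not> (\<not> P ^ n dvd A^2 \<or> \<not> P ^ n dvd TT * B^2)"
    hence "P ^ n dvd A^2" "P ^ n dvd TT * B^2" by auto
    hence "P ^ n dvd (z - (A^2 + TT * B^2)) + A^2 + TT * B^2" using d by (intro dvd_add)
    moreover have "(z - (A^2 + TT * B^2)) + A^2 + TT * B^2 = z" by (simp add: algebra_simps)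
    ultimately show False using nz by (simp only:)
  qed
  have "P ^ n dvd (z' - z) + (z - (A^2 + TT * B^2))" using z' d by (rule dvd_add)
  moreover have "(z' - z) + (z - (A^2 + TT * B^2)) = z' - (A^2 + TT * B^2)" by (simp add: algebra_simps)
  ultimately have "P ^ n dvd z' - (A^2 + TT * B^2)" by (simp only:)
  then obtain A' B' where "P ^ \<mu> dvd z' - (A'^2 + TT * B'^2)" using stable[OF two mi _ nd] by blast
  thus ?thesis by (auto simp: sq_memT)
qed



lemma pigeon:
  fixes P :: "'a::{field,finite} poly"
  assumes odd: "odd CARD('a)" and mi: "monic_irred P" and nT: "\<not> P dvd TT"
  shows "\<exists>A B. P dvd u - (A^2 + TT * B^2)"
proof -
  have P0: "P \<noteq> 0" and pr: "prime_elem P" using mi_props[OF mi] by auto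
  define V where "V = U P"
  have finV: "finite V" and cV: "card V = CARD('a) ^ degree P" using U_card[OF P0] by (auto simp: V_def)
  have oddV: "odd (card V)" using cV odd by (simp add: even_power)
  have inV: "\<And>A. A \<in> V \<Longrightarrow> A mod P = A" by (simp add: V_def U_def)
  define X where "X = (\<lambda>A. A^2 mod P) ` V"
  have finX: "finite X" using finV by (simp add: X_def)
  have XV: "X \<subseteq> V" by (auto simp: X_def V_def U_def)
  define F where "F x = {A \<in> V. A^2 mod P = x}" for x
  have Vun: "V = (\<Union>x\<in>X. F x)" by (auto simp: F_def X_def)
  have cF: "card (F x) \<le> 2" if x: "x \<in> X" for x
  proof -
    obtain A0 where A0: "A0 \<in> V" "x = A0^2 mod P" using x by (auto simp: X_def)
    have "F x \<subseteq> {A0, (- A0) mod P}"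
    proof
      fix A assume "A \<in> F x"
      hence A: "A \<in> V" "A^2 mod P = A0^2 mod P" using A0 by (auto simp: F_def)
      hence "P dvd A^2 - A0^2" by (simp add: mod_eq_dvd_iff)
      moreover have "A^2 - A0^2 = (A - A0) * (A + A0)" by (simp add: algebra_simps power2_eq_square)
      ultimately have "P dvd (A - A0) * (A + A0)" by simp
      hence "P dvd A - A0 \<or> P dvd A - (- A0)" using pr prime_elem_dvd_mult_iff by auto
      thus "A \<in> {A0, (- A0) mod P}"
      proof
        assume "P dvd A - A0"
        hence "A mod P = A0 mod P" by (simp add: mod_eq_dvd_iff)
        thus ?thesis using inV[OF A(1)] inV[OF A0(1)] by simp
      next
        assume "P dvd A - (- A0)"
        hence "A mod P = (- A0) mod P" by (simp only: mod_eq_dvd_iff)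
        thus ?thesis using inV[OF A(1)] by simp
      qed
    qed
    hence "card (F x) \<le> card {A0, (- A0) mod P}" by (intro card_mono) auto
    also have "\<dots> \<le> 2" by (cases "A0 = (- A0) mod P") auto
    finally show ?thesis .
  qed
  have "card V \<le> (\<Sum>x\<in>X. card (F x))" unfolding Vun by (rule card_UN_le[OF finX])
  also have "\<dots> \<le> (\<Sum>x\<in>X. 2)" using cF by (intro sum_mono) auto
  finally have V2: "card V \<le> 2 * card X" by simp
  define g where "g x = (u - TT * x) mod P" for x
  define Y where "Y = g ` X"
  have injg: "inj_on g X"
  proof (rule inj_onI)
    fix x y assume x: "x \<in> X" and y: "y \<in> X" and e: "g x = g y"
    hence "P dvd (u - TT * x) - (u - TT * y)" by (simp add: g_def mod_eq_dvd_iff)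
    moreover have "(u - TT * x) - (u - TT * y) = (y - x) * TT" by (simp add: algebra_simps)
    ultimately have "P dvd (y - x) * TT" by simp
    hence "P dvd y - x" using pr nT prime_elem_dvd_mult_iff by blast
    hence "y mod P = x mod P" by (simp add: mod_eq_dvd_iff)
    moreover have "x mod P = x" "y mod P = y" using inV x y XV by auto
    ultimately show "x = y" by simp
  qed
  have cY: "card Y = card X" unfolding Y_def by (rule card_image[OF injg])
  have YV: "Y \<subseteq> V" by (auto simp: Y_def g_def V_def U_def)
  have "X \<inter> Y \<noteq> {}"
  proof
    assume dis: "X \<inter> Y = {}"
    have finY: "finite Y" using finX by (simp add: Y_def)
    have "card (X \<union> Y) = card X + card Y" using card_Un_disjoint[OF finX finY dis] .
    moreover have "card (X \<union> Y) \<le> card V" using XV YV finV by (intro card_mono) auto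
    ultimately have "card V = 2 * card X" using V2 cY by simp
    thus False using oddV by simp
  qed
  then obtain x where x: "x \<in> X" "x \<in> Y" by auto
  obtain A where A: "x = A^2 mod P" using x(1) by (auto simp: X_def)
  obtain x' where x': "x' \<in> X" "x = g x'" using x(2) by (auto simp: Y_def)
  obtain B where B: "x' = B^2 mod P" using x'(1) by (auto simp: X_def)
  have "P dvd (u - TT * (B^2 mod P)) - (u - TT * B^2)"
  proof -
    have "(u - TT * (B^2 mod P)) - (u - TT * B^2) = TT * (B^2 - B^2 mod P)" by (simp add: algebra_simps)
    also have "\<dots> = P * (TT * (B^2 div P))" by (simp add: minus_mod_eq_mult_div algebra_simps)
    finally show ?thesis by simp
  qed
  hence "(u - TT * (B^2 mod P)) mod P = (u - TT * B^2) mod P" by (simp only: mod_eq_dvd_iff)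
  hence "A^2 mod P = (u - TT * B^2) mod P" using A x' B by (simp add: g_def)
  hence "P dvd A^2 - (u - TT * B^2)" by (simp only: mod_eq_dvd_iff)
  hence "P dvd - (A^2 - (u - TT * B^2))" by (simp only: dvd_minus_iff)
  moreover have "- (A^2 - (u - TT * B^2)) = u - (A^2 + TT * B^2)" by (simp add: algebra_simps)
  ultimately have "P dvd u - (A^2 + TT * B^2)" by (simp only:)
  thus ?thesis by blast
qed

lemma units_rep:
  fixes P :: "'a::{field,finite} poly"
  assumes odd: "odd CARD('a)" and mi: "monic_irred P" and nT: "\<not> P dvd TT" and nu: "\<not> P dvd u"
  shows "u mod P ^ \<mu> \<in> sq_form_set (P ^ \<mu>)"
proof -
  obtain A B where "P dvd u - (A^2 + TT * B^2)" using pigeon[OF odd mi nT] by blast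
  hence "P ^ 1 dvd u - (A^2 + TT * B^2)" by simp
  moreover have "\<not> P ^ 1 dvd u" using nu by simp
  ultimately show ?thesis using good[OF two_nz[OF odd] mi] by (metis dvd_0_right diff_self)
qed



lemma empty_up:
  assumes "sq_form_tuple_set h (P ^ \<nu>) = {}" "\<nu> \<le> \<mu>"
  shows "sq_form_tuple_set h (P ^ \<mu>) = {}"
proof (rule ccontr)
  assume "sq_form_tuple_set h (P ^ \<mu>) \<noteq> {}"
  then obtain f where "f \<in> sq_form_tuple_set h (P ^ \<mu>)" by auto
  hence "f mod P ^ \<nu> \<in> sq_form_tuple_set h (P ^ \<nu>)"
    using assms(2) by (intro reduce) (simp_all add: le_imp_power_dvd)
  thus False using assms(1) by simp
qed

lemma dens_zero:
  fixes P :: "'a::{field,finite} poly"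
  assumes mi: "monic_irred P" and e: "sq_form_tuple_set h (P ^ \<nu>) = {}"
  shows "local_density h P = 0"
proof -
  have ev: "eventually (\<lambda>\<mu>. rat h P \<mu> = 0) sequentially"
    unfolding eventually_at_top_linorder
    using empty_up[OF e] by (intro exI[of _ \<nu>]) (auto simp: rat_def)
  have "(\<lambda>\<mu>. 0::real) \<longlonglongrightarrow> 0" by simp
  hence "rat h P \<longlonglongrightarrow> 0" using tendsto_cong[OF ev] by simp
  thus ?thesis using dens_lim(1)[OF mi] LIMSEQ_unique by blast
qed

lemma diff_ndvd:
  fixes P :: "'a::field poly"
  assumes mi: "monic_irred P" and dist: "distinct h" and i: "i < length h" "j < length h" "i \<noteq> j"
  shows "\<not> P ^ Suc (\<Sum>i<length h. \<Sum>j<length h. degree (h!i - h!j)) dvd h!i - h!j"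
proof
  let ?D = "\<Sum>i<length h. \<Sum>j<length h. degree (h!i - h!j)"
  assume d: "P ^ Suc ?D dvd h!i - h!j"
  have ne: "h!i - h!j \<noteq> 0" using dist i by (simp add: nth_eq_iff_index_eq)
  have P0: "P \<noteq> 0" and dP: "degree P > 0" using mi_props[OF mi] by auto
  have "degree (P ^ Suc ?D) \<le> degree (h!i - h!j)" by (rule dvd_imp_degree_le[OF d ne])
  moreover have "degree (P ^ Suc ?D) = Suc ?D * degree P" by (rule degree_power_eq[OF P0])
  moreover have "Suc ?D \<le> Suc ?D * degree P" using mult_le_mono2[of 1 "degree P" "Suc ?D"] dP by simp
  moreover have "degree (h!i - h!j) \<le> (\<Sum>j<length h. degree (h!i - h!j))"
    using i by (intro member_le_sum) auto
  moreover have "(\<Sum>j<length h. degree (h!i - h!j)) \<le> ?D"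
    using i by (intro member_le_sum[of i "{..<length h}" "\<lambda>i. \<Sum>j<length h. degree (h!i - h!j)"]) auto
  ultimately show False by linarith
qed

lemma coset_card:
  fixes P :: "'a::{field,finite} poly"
  assumes mi: "monic_irred P" and L: "L \<le> \<mu>" "1 \<le> L"
    and sub: "\<And>x. x \<in> U (P ^ \<mu>) \<Longrightarrow> P ^ L dvd x - g \<Longrightarrow> x \<in> S"
    and fin: "finite S"
  shows "CARD('a) ^ (degree P * (\<mu> - L)) \<le> card S"
proof -
  have P0: "P \<noteq> 0" and dP: "degree P > 0" using mi_props[OF mi] by auto
  define d where "d = degree P"
  have dpos: "d > 0" using dP by (simp add: d_def)
  define g0 where "g0 = g mod P ^ L"
  define \<phi> where "\<phi> c = g0 + P ^ L * c" for c
  have PL0: "P ^ L \<noteq> 0" using P0 by simp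
  have Pm0: "P ^ \<mu> \<noteq> 0" using P0 by simp
  have dmu: "d * L \<le> d * \<mu>" "0 < d * \<mu>" using L dpos by auto
  have inj: "inj_on \<phi> (U (P ^ (\<mu> - L)))"
    by (rule inj_onI) (use P0 in \<open>simp add: \<phi>_def\<close>)
  have dg0: "degree g0 < d * \<mu>"
  proof (cases "g0 = 0")
    case False
    hence "degree g0 < degree (P ^ L)" using degree_mod_less[OF PL0, of g] by (simp add: g0_def)
    moreover have "degree (P ^ L) = L * d" using P0 by (simp add: degree_power_eq d_def)
    moreover have "L * d \<le> d * \<mu>" using L by (simp add: mult.commute)
    ultimately show ?thesis by linarith
  qed (use dmu in simp)
  have gdvd: "P ^ L dvd g0 - g" unfolding g0_def
    by (metis dvd_minus_iff minus_diff_eq minus_mod_eq_mult_div dvd_triv_left)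
  have img: "\<phi> ` U (P ^ (\<mu> - L)) \<subseteq> S"
  proof (rule image_subsetI)
    fix c assume c: "c \<in> U (P ^ (\<mu> - L))"
    have dc: "degree (P ^ L * c) < d * \<mu>"
    proof (cases "c = 0")
      case False
      have "degree c < d * (\<mu> - L)"
        using c U_iff[of "P ^ (\<mu> - L)" c] P0 False by (simp add: degree_power_eq d_def mult.commute)
      moreover have "degree (P ^ L * c) = d * L + degree c" using P0 False
        by (simp add: degree_mult_eq degree_power_eq d_def mult.commute)
      moreover have "d * L + d * (\<mu> - L) = d * \<mu>" using L by (simp add: diff_mult_distrib2)
      ultimately show ?thesis by linarith
    qed (use dmu in simp)
    have "degree (\<phi> c) < degree (P ^ \<mu>)"
      using degree_add_less[OF dg0 dc] P0 by (simp add: \<phi>_def degree_power_eq d_def mult.commute)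
    hence "\<phi> c \<in> U (P ^ \<mu>)" using U_iff[OF Pm0] by blast
    moreover have "P ^ L dvd \<phi> c - g"
    proof -
      have eq: "\<phi> c - g = (g0 - g) + P ^ L * c" by (simp add: \<phi>_def algebra_simps)
      have "P ^ L dvd (g0 - g) + P ^ L * c" using gdvd by (rule dvd_add) simp
      thus ?thesis by (simp only: eq)
    qed
    ultimately show "\<phi> c \<in> S" by (rule sub)
  qed
  have "CARD('a) ^ (degree P * (\<mu> - L)) = card (U (P ^ (\<mu> - L)))"
    using U_card(2)[of "P ^ (\<mu> - L)"] P0 by (simp add: degree_power_eq mult.commute)
  also have "\<dots> = card (\<phi> ` U (P ^ (\<mu> - L)))" by (rule card_image[OF inj, symmetric])
  also have "\<dots> \<le> card S" by (rule card_mono[OF fin img])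
  finally show ?thesis .
qed



lemma dens_pos:
  fixes P :: "'a::{field,finite} poly"
  assumes odd: "odd CARD('a)" and mi: "monic_irred P" and dist: "distinct h"
    and ne: "\<forall>\<nu>\<ge>1. sq_form_tuple_set h (P ^ \<nu>) \<noteq> {}"
  shows "local_density h P > 0"
proof -
  have two: "(2::'a) \<noteq> 0" by (rule two_nz[OF odd])
  have P0: "P \<noteq> 0" and dP: "degree P > 0" using mi_props[OF mi] by auto
  define k where "k = length h"
  define D where "D = (\<Sum>i<length h. \<Sum>j<length h. degree (h!i - h!j))"
  define n0 where "n0 = Suc D"
  have nd: "\<And>i j. i < k \<Longrightarrow> j < k \<Longrightarrow> i \<noteq> j \<Longrightarrow> \<not> P ^ n0 dvd h!i - h!j"
    unfolding n0_def D_def k_def using diff_ndvd[OF mi dist] by blast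
  have "1 \<le> n0" by (simp add: n0_def)
  hence "sq_form_tuple_set h (P ^ n0) \<noteq> {}" using ne by blast
  then obtain f where f: "f \<in> sq_form_tuple_set h (P ^ n0)" by blast
  have rep: "\<exists>A B. P ^ n0 dvd (f + h!i) - (A^2 + TT * B^2)" if "i < k" for i
  proof -
    have "(f + h!i) mod P ^ n0 \<in> sq_form_set (P ^ n0)" using f that by (auto simp: sq_form_tuple_set_def k_def)
    thus ?thesis by (simp only: sq_memT)
  qed
  obtain g L where L: "1 \<le> L"
    and claim: "\<And>x \<mu> i. P ^ L dvd x - g \<Longrightarrow> i < k \<Longrightarrow> (x + h!i) mod P ^ \<mu> \<in> sq_form_set (P ^ \<mu>)"
  proof (cases "\<exists>i0<k. P ^ n0 dvd f + h!i0")
    case False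
    show ?thesis
    proof (rule that[of n0 f])
      show "1 \<le> n0" by (simp add: n0_def)
    next
      fix x \<mu> i assume x: "P ^ n0 dvd x - f" and i: "i < k"
      obtain A B where AB: "P ^ n0 dvd (f + h!i) - (A^2 + TT * B^2)" using rep[OF i] by blast
      have "\<not> P ^ n0 dvd f + h!i" using False i by blast
      moreover have "P ^ n0 dvd (x + h!i) - (f + h!i)" using x by simp
      ultimately show "(x + h!i) mod P ^ \<mu> \<in> sq_form_set (P ^ \<mu>)" using good[OF two mi AB] by blast
    qed
  next
    case True
    then obtain i0 where i0: "i0 < k" "P ^ n0 dvd f + h!i0" by blast
    define g where "g = (P ^ n0)^2 - h!i0"
    show ?thesis
    proof (rule that[of "Suc (2 * n0)" g])
      show "1 \<le> Suc (2 * n0)" by simp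
    next
      fix x \<mu> i assume x: "P ^ Suc (2 * n0) dvd x - g" and i: "i < k"
      show "(x + h!i) mod P ^ \<mu> \<in> sq_form_set (P ^ \<mu>)"
      proof (cases "i = i0")
        case True
        have eq: "(x + h!i) - ((P ^ n0)^2 + TT * 0^2) = x - g" using True by (simp add: g_def)
        have d: "P ^ Suc (2 * n0) dvd (x + h!i) - ((P ^ n0)^2 + TT * 0^2)" using x by (simp only: eq)
        have ndd: "\<not> P ^ Suc (2 * n0) dvd (P ^ n0)^2"
        proof
          assume a: "P ^ Suc (2 * n0) dvd (P ^ n0)^2"
          have "(P ^ n0)^2 = P ^ (2 * n0)" by (simp add: power_even_eq)
          hence "P ^ Suc (2 * n0) dvd P ^ (2 * n0)" using a by simp
          hence "degree (P ^ Suc (2 * n0)) \<le> degree (P ^ (2 * n0))" using P0 by (intro dvd_imp_degree_le) auto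
          moreover have "degree (P ^ Suc (2 * n0)) = Suc (2 * n0) * degree P" by (rule degree_power_eq[OF P0])
          moreover have "degree (P ^ (2 * n0)) = (2 * n0) * degree P" by (rule degree_power_eq[OF P0])
          ultimately show False using dP by simp
        qed
        obtain A' B' where "P ^ \<mu> dvd (x + h!i) - (A'^2 + TT * B'^2)"
          using stable[OF two mi d] ndd by blast
        thus ?thesis by (simp only: sq_memT) blast
      next
        case False
        obtain A B where AB: "P ^ n0 dvd (f + h!i) - (A^2 + TT * B^2)" using rep[OF i] by blast
        have nz: "\<not> P ^ n0 dvd f + h!i"
        proof
          assume "P ^ n0 dvd f + h!i"
          hence "P ^ n0 dvd (f + h!i) - (f + h!i0)" using i0(2) by (rule dvd_diff)
          thus False using nd[OF i i0(1) False] by simp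
        qed
        have eq: "(x + h!i) - (f + h!i) = (x - g) + ((P ^ n0)^2 - (f + h!i0))" by (simp add: g_def algebra_simps)
        have "P ^ n0 dvd P ^ Suc (2 * n0)" by (rule le_imp_power_dvd) simp
        hence "P ^ n0 dvd x - g" using x by (rule dvd_trans)
        moreover have "P ^ n0 dvd (P ^ n0)^2 - (f + h!i0)" using i0(2) by (intro dvd_diff) (simp_all add: power2_eq_square)
        ultimately have "P ^ n0 dvd (x + h!i) - (f + h!i)" unfolding eq by (rule dvd_add)
        thus ?thesis using good[OF two mi AB nz] by blast
      qed
    qed
  qed
  define q where "q = real CARD('a)"
  define d where "d = degree P"
  have qpos: "q > 0" by (simp add: q_def)
  have bound: "1 / q ^ (d * L) \<le> rat h P \<mu>" if mu: "\<mu> \<ge> L" for \<mu>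
  proof -
    have fin: "finite (sq_form_tuple_set h (P ^ \<mu>))" using P0 by (intro tuple_finite) simp
    have "CARD('a) ^ (degree P * (\<mu> - L)) \<le> card (sq_form_tuple_set h (P ^ \<mu>))"
    proof (rule coset_card[OF mi mu L _ fin])
      fix x assume "x \<in> U (P ^ \<mu>)" "P ^ L dvd x - g"
      thus "x \<in> sq_form_tuple_set h (P ^ \<mu>)" using claim by (auto simp: sq_form_tuple_set_def U_def k_def)
    qed
    hence c: "q ^ (d * (\<mu> - L)) \<le> real (card (sq_form_tuple_set h (P ^ \<mu>)))"
      unfolding q_def d_def by (metis of_nat_le_iff of_nat_power)
    have e: "q ^ (d * \<mu>) = q ^ (d * (\<mu> - L)) * q ^ (d * L)"
      using mu by (simp add: power_add[symmetric] diff_mult_distrib2)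
    have "1 / q ^ (d * L) = q ^ (d * (\<mu> - L)) / q ^ (d * \<mu>)" using qpos by (simp add: e)
    also have "\<dots> \<le> real (card (sq_form_tuple_set h (P ^ \<mu>))) / q ^ (d * \<mu>)"
      using c qpos by (intro divide_right_mono) auto
    also have "\<dots> = rat h P \<mu>" by (simp add: rat_def q_def d_def)
    finally show ?thesis .
  qed
  have "1 / q ^ (d * L) \<le> local_density h P"
    using bound by (intro LIMSEQ_le_const[OF dens_lim(1)[OF mi]]) auto
  moreover have "1 / q ^ (d * L) > 0" using qpos by simp
  ultimately show ?thesis by linarith
qed

lemma part1:
  fixes P :: "'a::{field,finite} poly"
  assumes odd: "odd CARD('a)" and mi: "monic_irred P" and dist: "distinct h"
  shows "local_density h P = 0 \<longleftrightarrow> (\<exists>\<nu>\<ge>1. sq_form_tuple_set h (P ^ \<nu>) = {})"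
  using dens_pos[OF odd mi dist] dens_zero[OF mi] by fastforce



lemma generic_count:
  fixes P :: "'a::{field,finite} poly"
  assumes odd: "odd CARD('a)" and mi: "monic_irred P" and nT: "\<not> P dvd TT"
    and nd: "\<forall>i<length h. \<forall>j<length h. i \<noteq> j \<longrightarrow> \<not> P dvd h!i - h!j"
    and nu: "1 \<le> \<nu>"
  shows "real (card (sq_form_tuple_set h (P ^ \<nu>))) =
           real (card (U (P ^ \<nu>))) - real (length h) * (real (card (U (P ^ \<nu>))) - real (card (sq_form_tuple_set [0] (P ^ \<nu>))))"
    and "card (U (P ^ \<nu>)) - card (sq_form_tuple_set [0] (P ^ \<nu>)) \<le> CARD('a) ^ (degree P * (\<nu> - 1))"
    and "card (sq_form_tuple_set [0] (P ^ \<nu>)) \<le> card (U (P ^ \<nu>))"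
proof -
  have P0: "P \<noteq> 0" and dP: "degree P > 0" and pr: "prime_elem P" using mi_props[OF mi] by auto
  define M where "M = P ^ \<nu>"
  have M0: "M \<noteq> 0" using P0 by (simp add: M_def)
  define V where "V = U M"
  define G where "G = sq_form_tuple_set [0] M"
  define k where "k = length h"
  have finV: "finite V" using U_card[OF M0] by (simp add: V_def)
  have Gdef: "G = {f. f \<in> V \<and> f mod M \<in> sq_form_set M}"
    by (auto simp: G_def V_def U_def sq_form_tuple_set_def)
  have GV: "G \<subseteq> V" by (auto simp: Gdef)
  have finG: "finite G" using finite_subset[OF GV finV] .
  have inV: "\<And>x. x \<in> V \<Longrightarrow> x mod M = x" by (simp add: V_def U_def)
  define B where "B i = {f \<in> V. (f + h!i) mod M \<notin> sq_form_set M}" for i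
  have BV: "\<And>i. B i \<subseteq> V" by (auto simp: B_def)
  have Sdef: "sq_form_tuple_set h M = V - (\<Union>i\<in>{..<k}. B i)"
    by (auto simp: sq_form_tuple_set_def V_def U_def B_def k_def)
  have unV: "(\<Union>i\<in>{..<k}. B i) \<subseteq> V" using BV by auto
  have nsq: "P dvd f + h!i" if "f \<in> B i" for f i
  proof (rule ccontr)
    assume "\<not> P dvd f + h!i"
    hence "(f + h!i) mod P ^ \<nu> \<in> sq_form_set (P ^ \<nu>)" by (rule units_rep[OF odd mi nT])
    thus False using that by (simp add: B_def M_def)
  qed
  have disj: "\<forall>i\<in>{..<k}. \<forall>j\<in>{..<k}. i \<noteq> j \<longrightarrow> B i \<inter> B j = {}"
  proof (intro ballI impI)
    fix i j assume i: "i \<in> {..<k}" and j: "j \<in> {..<k}" and ij: "i \<noteq> j"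
    show "B i \<inter> B j = {}"
    proof (rule ccontr)
      assume "B i \<inter> B j \<noteq> {}"
      then obtain f where "f \<in> B i" "f \<in> B j" by auto
      hence "P dvd (f + h!i) - (f + h!j)" using nsq by (intro dvd_diff) auto
      thus False using nd i j ij by (auto simp: k_def)
    qed
  qed
  have cB: "card (B i) = card (V - G)" for i
  proof (rule bij_betw_same_card)
    show "bij_betw (\<lambda>x. (x + h!i) mod M) (B i) (V - G)"
    proof (rule bij_betw_byWitness[where f'="\<lambda>y. (y - h!i) mod M"])
      show "\<forall>a\<in>B i. ((a + h!i) mod M - h!i) mod M = a"
      proof
        fix a assume "a \<in> B i"
        hence am: "a mod M = a" using BV inV by blast
        have "((a + h!i) mod M - h!i) mod M = ((a + h!i) - h!i) mod M" by (rule mod_diff_left_eq)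
        thus "((a + h!i) mod M - h!i) mod M = a" using am by simp
      qed
      show "\<forall>a\<in>V - G. ((a - h!i) mod M + h!i) mod M = a"
      proof
        fix a assume "a \<in> V - G"
        hence am: "a mod M = a" using inV by blast
        have "((a - h!i) mod M + h!i) mod M = ((a - h!i) + h!i) mod M" by (rule mod_add_left_eq)
        thus "((a - h!i) mod M + h!i) mod M = a" using am by simp
      qed
      show "(\<lambda>x. (x + h!i) mod M) ` B i \<subseteq> V - G"
      proof (rule image_subsetI)
        fix x assume x: "x \<in> B i"
        have "(x + h!i) mod M \<in> V" by (simp add: V_def U_def)
        moreover have "(x + h!i) mod M \<notin> G"
        proof
          assume "(x + h!i) mod M \<in> G"
          hence "(x + h!i) mod M mod M \<in> sq_form_set M" by (simp only: Gdef mem_Collect_eq)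
          thus False using x by (simp add: B_def)
        qed
        ultimately show "(x + h!i) mod M \<in> V - G" by blast
      qed
      show "(\<lambda>y. (y - h!i) mod M) ` (V - G) \<subseteq> B i"
      proof (rule image_subsetI)
        fix y assume y: "y \<in> V - G"
        hence ym: "y mod M = y" using inV by blast
        have "((y - h!i) mod M + h!i) mod M = ((y - h!i) + h!i) mod M" by (rule mod_add_left_eq)
        hence e: "((y - h!i) mod M + h!i) mod M = y" using ym by simp
        have "y mod M \<notin> sq_form_set M" using y by (simp add: Gdef)
        hence "((y - h!i) mod M + h!i) mod M \<notin> sq_form_set M" using e ym by simp
        moreover have "(y - h!i) mod M \<in> V" by (simp add: V_def U_def)
        ultimately show "(y - h!i) mod M \<in> B i" by (simp add: B_def)
      qed
    qed
  qed
  have cUn: "card (\<Union>i\<in>{..<k}. B i) = k * card (V - G)"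
  proof -
    have "card (\<Union>i\<in>{..<k}. B i) = (\<Sum>i\<in>{..<k}. card (B i))"
      using disj finite_subset[OF BV finV] by (intro card_UN_disjoint) auto
    thus ?thesis using cB by simp
  qed
  have cS: "card (sq_form_tuple_set h M) = card V - k * card (V - G)"
    unfolding Sdef using card_Diff_subset[OF finite_subset[OF unV finV] unV] cUn by simp
  have le1: "k * card (V - G) \<le> card V" using card_mono[OF finV unV] cUn by simp
  have cVG: "card (V - G) = card V - card G" by (rule card_Diff_subset[OF finG GV])
  have GleV: "card G \<le> card V" by (rule card_mono[OF finV GV])
  show "real (card (sq_form_tuple_set h (P ^ \<nu>))) =
           real (card (U (P ^ \<nu>))) - real (length h) * (real (card (U (P ^ \<nu>))) - real (card (sq_form_tuple_set [0] (P ^ \<nu>))))"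
    using cS le1 cVG GleV unfolding M_def[symmetric] V_def[symmetric] G_def[symmetric] k_def[symmetric]
    by (simp add: of_nat_diff)
  show "card (sq_form_tuple_set [0] (P ^ \<nu>)) \<le> card (U (P ^ \<nu>))"
    using GleV by (simp add: G_def V_def M_def)
  define W where "W = {f \<in> V. P dvd f}"
  have VGW: "V - G \<subseteq> W"
  proof
    fix f assume f: "f \<in> V - G"
    show "f \<in> W"
    proof (rule ccontr)
      assume "f \<notin> W"
      hence "\<not> P dvd f" using f by (simp add: W_def)
      hence "(f + 0) mod P ^ \<nu> \<in> sq_form_set (P ^ \<nu>)" using units_rep[OF odd mi nT] by simp
      thus False using f by (simp add: Gdef M_def)
    qed
  qed
  have injW: "inj_on (\<lambda>f. f div P) W"
  proof (rule inj_onI)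
    fix f g assume fg: "f \<in> W" "g \<in> W" "f div P = g div P"
    have "P * (f div P) = f" using fg(1) by (simp add: W_def dvd_mult_div_cancel)
    moreover have "P * (g div P) = g" using fg(2) by (simp add: W_def dvd_mult_div_cancel)
    ultimately show "f = g" using fg(3) by metis
  qed
  have imgW: "(\<lambda>f. f div P) ` W \<subseteq> U (P ^ (\<nu> - 1))"
  proof (rule image_subsetI)
    fix f assume f: "f \<in> W"
    hence "f = 0 \<or> degree f < degree M" using U_iff[OF M0] by (auto simp: W_def V_def)
    moreover have "degree M = degree P + degree P * (\<nu> - 1)"
    proof -
      have "\<nu> = Suc (\<nu> - 1)" using nu by simp
      hence "degree M = Suc (\<nu> - 1) * degree P" using P0 by (simp add: M_def degree_power_eq del: Suc_diff_1)
      thus ?thesis by simp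
    qed
    ultimately have "f div P = 0 \<or> degree (f div P) < degree P * (\<nu> - 1)"
      using P0 by (intro degree_div_bound) auto
    thus "f div P \<in> U (P ^ (\<nu> - 1))"
      using U_iff[of "P ^ (\<nu> - 1)"] P0 by (auto simp: degree_power_eq mult.commute)
  qed
  have "card (V - G) \<le> card W" using VGW finV by (intro card_mono) (auto simp: W_def)
  also have "card W = card ((\<lambda>f. f div P) ` W)" by (rule card_image[OF injW, symmetric])
  also have "\<dots> \<le> card (U (P ^ (\<nu> - 1)))" using U_card(1)[of "P ^ (\<nu> - 1)"] P0 by (intro card_mono[OF _ imgW]) auto
  also have "\<dots> = CARD('a) ^ (degree P * (\<nu> - 1))" using U_card(2)[of "P ^ (\<nu> - 1)"] P0 by (simp add: degree_power_eq mult.commute)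
  finally show "card (U (P ^ \<nu>)) - card (sq_form_tuple_set [0] (P ^ \<nu>)) \<le> CARD('a) ^ (degree P * (\<nu> - 1))"
    using cVG by (simp add: V_def G_def M_def)
qed



lemma factor_bounds:
  fixes e :: real
  assumes e0: "0 \<le> e" and e1: "e < 1" and ke: "real k * e \<le> 1"
  shows "1 - (real k * e)^2 \<le> (1 - real k * e) / (1 - e) ^ k"
    and "(1 - real k * e) / (1 - e) ^ k \<le> 1"
proof -
  have xpos: "(1 - e) ^ k > 0" using e1 by simp
  have b0: "1 + real k * (- e) \<le> (1 + (- e)) ^ k" using e1 by (intro Bernoulli_inequality) simp
  hence "1 - real k * e \<le> (1 - e) ^ k" by simp
  thus "(1 - real k * e) / (1 - e) ^ k \<le> 1" using xpos by simp
  have b1: "1 + real k * e \<le> (1 + e) ^ k" using e0 by (intro Bernoulli_inequality) simp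
  have "(1 - e) ^ k * (1 + e) ^ k = (1 - e^2) ^ k" by (simp add: power_mult_distrib[symmetric] algebra_simps power2_eq_square)
  also have "\<dots> \<le> 1" using e0 e1 by (intro power_le_one) (auto simp: power2_eq_square mult_le_one)
  finally have b2: "(1 - e) ^ k * (1 + e) ^ k \<le> 1" .
  have "(1 - e) ^ k * (1 + real k * e) \<le> (1 - e) ^ k * (1 + e) ^ k"
    using b1 xpos by (intro mult_left_mono) auto
  hence b3: "(1 - e) ^ k * (1 + real k * e) \<le> 1" using b2 by linarith
  have "(1 - (real k * e)^2) * (1 - e) ^ k = (1 - real k * e) * ((1 - e) ^ k * (1 + real k * e))"
    by (simp add: algebra_simps power2_eq_square)
  also have "\<dots> \<le> (1 - real k * e) * 1" using b3 ke by (intro mult_left_mono) auto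
  finally show "1 - (real k * e)^2 \<le> (1 - real k * e) / (1 - e) ^ k"
    using xpos by (simp add: pos_le_divide_eq)
qed

lemma aux1: "(a::real) > 0 \<Longrightarrow> b > 0 \<Longrightarrow> (a * b - a) / (a * b) = 1 - 1 / b"
  by (simp add: field_simps)

lemma aux2: "(n::real) > 0 \<Longrightarrow> (n - k * (n - g)) / n = 1 - k * (1 - g / n)"
  by (simp add: field_simps)

lemma generic_factor:
  fixes P :: "'a::{field,finite} poly"
  assumes odd: "odd CARD('a)" and mi: "monic_irred P" and nT: "\<not> P dvd TT"
    and nd: "\<forall>i<length h. \<forall>j<length h. i \<noteq> j \<longrightarrow> \<not> P dvd h!i - h!j"
    and kq: "real (length h) \<le> real CARD('a) ^ degree P"
  shows "1 - real (length h)^2 / real CARD('a) ^ (2 * degree P) \<le> local_factor h P"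
    and "local_factor h P \<le> 1"
proof -
  have P0: "P \<noteq> 0" and dP: "degree P > 0" using mi_props[OF mi] by auto
  define q where "q = real CARD('a)"
  define d where "d = degree P"
  define k where "k = length h"
  have qpos: "q > 1"
  proof -
    have "card {0::'a, 1} = 2" by simp
    moreover have "card {0::'a, 1} \<le> CARD('a)" by (rule card_mono) auto
    ultimately have "CARD('a) \<ge> 2" by simp
    thus ?thesis by (simp add: q_def)
  qed
  have qd: "q ^ d \<ge> q" using qpos dP by (simp add: d_def self_le_power)
  have cU: "real (card (U (P ^ \<nu>))) = q ^ (d * \<nu>)" for \<nu>
    using U_card(2)[of "P ^ \<nu>"] P0 by (simp add: q_def d_def degree_power_eq mult.commute)
  have r0: "1 - 1 / q ^ d \<le> rat [0] P \<nu> \<and> rat [0] P \<nu> \<le> 1" if nu: "1 \<le> \<nu>" for \<nu>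
  proof -
    note gc = generic_count[where h=h and P=P and \<nu>=\<nu>, OF odd mi nT nd nu]
    let ?cU = "card (U (P ^ \<nu>))" and ?cG = "card (sq_form_tuple_set [0] (P ^ \<nu>))"
    have "real (?cU - ?cG) \<le> real (CARD('a) ^ (degree P * (\<nu> - 1)))" using gc(2) by (simp only: of_nat_le_iff)
    hence "real ?cU - real ?cG \<le> q ^ (d * (\<nu> - 1))" using gc(3) by (simp add: of_nat_diff q_def d_def)
    hence c1: "q ^ (d * \<nu>) - q ^ (d * (\<nu> - 1)) \<le> real ?cG" using cU by simp
    have "real ?cG \<le> real ?cU" using gc(3) by (simp only: of_nat_le_iff)
    hence c2: "real ?cG \<le> q ^ (d * \<nu>)" using cU by simp
    have nu': "\<nu> = Suc (\<nu> - 1)" using nu by simp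
    have "d * \<nu> = d * (\<nu> - 1) + d" by (subst nu') simp
    hence e: "q ^ (d * \<nu>) = q ^ (d * (\<nu> - 1)) * q ^ d" by (simp add: power_add)
    have qp: "q ^ (d * \<nu>) > 0" using qpos by simp
    have "1 - 1 / q ^ d = (q ^ (d * \<nu>) - q ^ (d * (\<nu> - 1))) / q ^ (d * \<nu>)"
      unfolding e using qpos by (intro aux1[symmetric]) auto
    also have "\<dots> \<le> rat [0] P \<nu>" using c1 qp by (simp add: rat_def q_def d_def divide_right_mono)
    finally have "1 - 1 / q ^ d \<le> rat [0] P \<nu>" .
    moreover have "rat [0] P \<nu> \<le> 1" using c2 qp by (simp add: rat_def q_def d_def)
    ultimately show ?thesis by simp
  qed
  have rh: "rat h P \<nu> = 1 - real k * (1 - rat [0] P \<nu>)" if nu: "1 \<le> \<nu>" for \<nu>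
  proof -
    note gc = generic_count[where h=h and P=P and \<nu>=\<nu>, OF odd mi nT nd nu]
    have qp: "q ^ (d * \<nu>) > 0" using qpos by simp
    let ?cS = "card (sq_form_tuple_set h (P ^ \<nu>))" and ?cG = "card (sq_form_tuple_set [0] (P ^ \<nu>))"
    have "rat h P \<nu> = real ?cS / q ^ (d * \<nu>)" by (simp add: rat_def q_def d_def)
    also have "\<dots> = (q ^ (d * \<nu>) - real k * (q ^ (d * \<nu>) - real ?cG)) / q ^ (d * \<nu>)"
      using gc(1) cU[of \<nu>] by (simp add: k_def)
    also have "\<dots> = 1 - real k * (1 - real ?cG / q ^ (d * \<nu>))" by (rule aux2[OF qp])
    also have "\<dots> = 1 - real k * (1 - rat [0] P \<nu>)" by (simp add: rat_def q_def d_def)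
    finally show ?thesis .
  qed
  define \<delta>0 where "\<delta>0 = local_density [0] P"
  have L0: "rat [0] P \<longlonglongrightarrow> \<delta>0" using dens_lim(1)[OF mi] by (simp add: \<delta>0_def)
  have "\<exists>N. \<forall>n\<ge>N. 1 - 1 / q ^ d \<le> rat [0] P n" using r0 by blast
  hence d0lo: "1 - 1 / q ^ d \<le> \<delta>0" by (rule LIMSEQ_le_const[OF L0])
  have "\<exists>N. \<forall>n\<ge>N. rat [0] P n \<le> 1" using r0 by blast
  hence d0hi: "\<delta>0 \<le> 1" by (rule LIMSEQ_le_const2[OF L0])
  have lim1: "(\<lambda>\<nu>. 1 - real k * (1 - rat [0] P \<nu>)) \<longlonglongrightarrow> 1 - real k * (1 - \<delta>0)"
    by (intro tendsto_diff tendsto_const tendsto_mult L0)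
  have ev: "eventually (\<lambda>\<nu>. 1 - real k * (1 - rat [0] P \<nu>) = rat h P \<nu>) sequentially"
    unfolding eventually_at_top_linorder using rh by (intro exI[of _ 1]) auto
  have "rat h P \<longlonglongrightarrow> 1 - real k * (1 - \<delta>0)" using lim1 tendsto_cong[OF ev] by simp
  hence dh: "local_density h P = 1 - real k * (1 - \<delta>0)" using dens_lim(1)[OF mi] LIMSEQ_unique by blast
  define e where "e = 1 - \<delta>0"
  have e0: "0 \<le> e" using d0hi by (simp add: e_def)
  have eq: "e \<le> 1 / q ^ d" using d0lo by (simp add: e_def)
  have qd1: "1 / q ^ d < 1" using qpos qd by simp
  have e1: "e < 1" using eq qd1 by linarith
  have ke: "real k * e \<le> real k / q ^ d" using eq by (simp add: mult_left_mono divide_inverse)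
  also have "\<dots> \<le> 1" using kq qpos by (simp add: k_def q_def d_def)
  finally have ke1: "real k * e \<le> 1" .
  have lf: "local_factor h P = (1 - real k * e) / (1 - e) ^ k"
    by (simp add: local_factor_def dh e_def k_def \<delta>0_def)
  note fb = factor_bounds[OF e0 e1 ke1]
  show "local_factor h P \<le> 1" using fb(2) lf by simp
  have "(real k * e)^2 \<le> (real k / q ^ d)^2" using ke e0 by (intro power_mono) auto
  also have "\<dots> = real k ^ 2 / q ^ (2 * d)" by (simp add: power_divide power_mult[symmetric] mult.commute)
  finally show "1 - real (length h)^2 / real CARD('a) ^ (2 * degree P) \<le> local_factor h P"
    using fb(1) lf by (simp add: k_def q_def d_def)
qed



lemma prod_bound:
  fixes g :: "'b \<Rightarrow> real"
  assumes "finite S" "\<forall>x\<in>S. 0 \<le> g x \<and> g x \<le> 1"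
  shows "1 - prod g S \<le> (\<Sum>x\<in>S. 1 - g x) \<and> 0 \<le> prod g S \<and> prod g S \<le> 1"
  using assms
proof (induction S rule: finite_induct)
  case empty thus ?case by simp
next
  case (insert x F)
  hence IH: "1 - prod g F \<le> (\<Sum>x\<in>F. 1 - g x)" "0 \<le> prod g F" "prod g F \<le> 1" by auto
  have gx: "0 \<le> g x" "g x \<le> 1" using insert.prems by auto
  have p: "prod g (insert x F) = g x * prod g F" using insert.hyps by simp
  have s: "(\<Sum>y\<in>insert x F. 1 - g y) = (1 - g x) + (\<Sum>y\<in>F. 1 - g y)" using insert.hyps by simp
  have "1 - g x * prod g F \<le> (1 - g x) + (1 - prod g F)"
  proof -
    have "0 \<le> (1 - g x) * (1 - prod g F)" using gx IH by simp
    thus ?thesis by (simp add: algebra_simps)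
  qed
  moreover have "0 \<le> g x * prod g F" using gx IH by simp
  moreover have "g x * prod g F \<le> 1" using gx IH by (simp add: mult_le_one)
  ultimately show ?case using IH p s by simp
qed

lemma mi_finite:
  shows "finite {P::'a::{field,finite} poly. monic_irred P \<and> degree P = n}"
    and "card {P::'a::{field,finite} poly. monic_irred P \<and> degree P = n} \<le> CARD('a) ^ Suc n"
proof -
  have sub: "{P::'a poly. monic_irred P \<and> degree P = n} \<subseteq> Rs (Suc n)" by (auto simp: mem_Rs)
  show "finite {P::'a::{field,finite} poly. monic_irred P \<and> degree P = n}"
    using Rs_card finite_subset[OF sub] by blast
  show "card {P::'a::{field,finite} poly. monic_irred P \<and> degree P = n} \<le> CARD('a) ^ Suc n"
    using card_mono[OF _ sub] Rs_card[of "Suc n", where 'a='a] by simp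
qed

lemma nonempty0: "sq_form_tuple_set [0] (M::'a::field poly) \<noteq> {}"
proof -
  have "(0::'a poly) mod M \<in> sq_form_set M"
    unfolding sq_form_set_def by (rule CollectI, rule exI[of _ 0], rule exI[of _ 0]) simp
  hence "0 \<in> sq_form_tuple_set [0] M" by (simp add: sq_form_tuple_set_def)
  thus ?thesis by auto
qed

lemma delta0_pos:
  fixes P :: "'a::{field,finite} poly"
  assumes "odd CARD('a)" "monic_irred P"
  shows "local_density [0] P > 0"
  by (intro dens_pos[OF assms]) (simp_all add: nonempty0)

lemma degree_factor_bound:
  fixes h :: "'a::{field,finite} poly list"
  assumes odd: "odd CARD('a)" and dist: "distinct h"
  shows "\<exists>N0. \<forall>n\<ge>N0. norm (degree_factor h n - 1) \<le> real (length h)^2 * real CARD('a) * (1 / real CARD('a)) ^ n"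
proof -
  define k where "k = length h"
  define D where "D = (\<Sum>i<length h. \<Sum>j<length h. degree (h!i - h!j))"
  define q where "q = real CARD('a)"
  have q2: "CARD('a) \<ge> 2"
  proof -
    have "card {0::'a, 1} = 2" by simp
    moreover have "card {0::'a, 1} \<le> CARD('a)" by (rule card_mono) auto
    ultimately show ?thesis by simp
  qed
  have qpos: "q > 0" by (simp add: q_def)
  show ?thesis
  proof (intro exI[of _ "D + k + 2"] allI impI)
    fix n assume n: "D + k + 2 \<le> n"
    define S where "S = {P::'a poly. monic_irred P \<and> degree P = n}"
    have finS: "finite S" and cS: "card S \<le> CARD('a) ^ Suc n" using mi_finite by (auto simp: S_def)
    have kq: "real k \<le> q ^ n"
    proof -
      have "k < 2 ^ k" by (rule less_exp)
      also have "(2::nat) ^ k \<le> 2 ^ n" using n by (intro power_increasing) auto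
      also have "(2::nat) ^ n \<le> CARD('a) ^ n" using q2 by (intro power_mono) auto
      finally have "k \<le> CARD('a) ^ n" by simp
      thus ?thesis unfolding q_def by (metis of_nat_le_iff of_nat_power)
    qed
    have bnd: "1 - real k^2 / q ^ (2 * n) \<le> local_factor h P \<and> local_factor h P \<le> 1" if P: "P \<in> S" for P
    proof -
      have mi: "monic_irred P" and dP: "degree P = n" using P by (auto simp: S_def)
      have nT: "\<not> P dvd TT"
      proof
        assume "P dvd TT"
        hence "P = TT" by (rule dvd_T[OF mi])
        hence "degree P = 1" by simp
        thus False using dP n by simp
      qed
      have nd: "\<forall>i<length h. \<forall>j<length h. i \<noteq> j \<longrightarrow> \<not> P dvd h!i - h!j"
      proof (intro allI impI notI)
        fix i j assume i: "i < length h" and j: "j < length h" and ij: "i \<noteq> j" and d: "P dvd h!i - h!j"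
        have ne: "h!i - h!j \<noteq> 0" using dist i j ij by (simp add: nth_eq_iff_index_eq)
        have "degree P \<le> degree (h!i - h!j)" by (rule dvd_imp_degree_le[OF d ne])
        moreover have "degree (h!i - h!j) \<le> (\<Sum>j<length h. degree (h!i - h!j))"
          using j by (intro member_le_sum) auto
        moreover have "(\<Sum>j<length h. degree (h!i - h!j)) \<le> D"
          unfolding D_def using i by (intro member_le_sum[of i "{..<length h}" "\<lambda>i. \<Sum>j<length h. degree (h!i - h!j)"]) auto
        ultimately show False using dP n by linarith
      qed
      have kq': "real (length h) \<le> real CARD('a) ^ degree P" using kq dP by (simp add: k_def q_def)
      show ?thesis using generic_factor[OF odd mi nT nd kq'] dP by (simp add: k_def q_def)
    qed
    have small: "real k^2 / q ^ (2 * n) \<le> 1"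
    proof -
      have "real k^2 \<le> (q ^ n)^2" using kq by (intro power_mono) auto
      thus ?thesis using qpos by (simp add: power_mult[symmetric] mult.commute)
    qed
    have pb: "1 - prod (local_factor h) S \<le> (\<Sum>P\<in>S. 1 - local_factor h P) \<and> 0 \<le> prod (local_factor h) S \<and> prod (local_factor h) S \<le> 1"
      using bnd small by (intro prod_bound[OF finS]) force
    have "(\<Sum>P\<in>S. 1 - local_factor h P) \<le> (\<Sum>P\<in>S. real k^2 / q ^ (2 * n))"
      using bnd by (intro sum_mono) force
    also have "\<dots> = real (card S) * (real k^2 / q ^ (2 * n))" by simp
    also have "\<dots> \<le> q ^ Suc n * (real k^2 / q ^ (2 * n))"
    proof (rule mult_right_mono)
      show "real (card S) \<le> q ^ Suc n" using cS unfolding q_def by (metis of_nat_le_iff of_nat_power)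
    qed (use qpos in simp)
    also have "\<dots> = real k^2 * q * (1 / q) ^ n"
    proof -
      have "q ^ (2 * n) = q ^ n * q ^ n" by (simp add: mult_2 power_add)
      thus ?thesis using qpos by (simp add: power_one_over field_simps)
    qed
    finally have "1 - degree_factor h n \<le> real k^2 * q * (1 / q) ^ n" using pb by (simp add: degree_factor_def S_def)
    moreover have "degree_factor h n \<le> 1" using pb by (simp add: degree_factor_def S_def)
    ultimately show "norm (degree_factor h n - 1) \<le> real (length h)^2 * real CARD('a) * (1 / real CARD('a)) ^ n"
      by (simp add: k_def q_def)
  qed
qed



theorem mainTheorem12:
  fixes h :: "'a::{field,finite} poly list"
  assumes "odd CARD('a)"
    and "distinct h"
  shows "(\<forall>P. monic_irred P \<longrightarrow>
            (local_density h P = 0 \<longleftrightarrow> (\<exists>\<nu>\<ge>1. sq_form_tuple_set h (P ^ \<nu>) = {})))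
       \<and> convergent_prod (degree_factor h)
       \<and> (singular_series h = 0 \<longleftrightarrow>
            (\<exists>P \<nu>. monic_irred P \<and> \<nu> \<ge> 1 \<and> sq_form_tuple_set h (P ^ \<nu>) = {}))"
proof -
  have p1: "\<forall>P. monic_irred P \<longrightarrow>
            (local_density h P = 0 \<longleftrightarrow> (\<exists>\<nu>\<ge>1. sq_form_tuple_set h (P ^ \<nu>) = {}))"
    using part1[OF assms(1) _ assms(2)] by blast
  obtain N0 where N0: "\<forall>n\<ge>N0. norm (degree_factor h n - 1) \<le> real (length h)^2 * real CARD('a) * (1 / real CARD('a)) ^ n"
    using degree_factor_bound[OF assms] by blast
  have q2: "CARD('a) \<ge> 2"
  proof -
    have "card {0::'a, 1} = 2" by simp
    moreover have "card {0::'a, 1} \<le> CARD('a)" by (rule card_mono) auto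
    ultimately show ?thesis by simp
  qed
  have geo: "summable (\<lambda>n. real (length h)^2 * real CARD('a) * (1 / real CARD('a)) ^ n)"
    using q2 by (intro summable_mult summable_geometric) auto
  have ev: "eventually (\<lambda>n. norm (norm (degree_factor h n - 1)) \<le> real (length h)^2 * real CARD('a) * (1 / real CARD('a)) ^ n) sequentially"
    unfolding eventually_at_top_linorder using N0 by (intro exI[of _ N0]) simp
  have sm: "summable (\<lambda>n. norm (degree_factor h n - 1))"
    by (rule summable_comparison_test_ev[OF ev geo])
  have cp: "convergent_prod (degree_factor h)"
    by (rule abs_convergent_prod_imp_convergent_prod[OF summable_imp_abs_convergent_prod[OF sm]])
  have L: "(\<lambda>n. \<Prod>i\<le>n. degree_factor h i) \<longlonglongrightarrow> prodinf (degree_factor h)"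
    by (rule convergent_prod_LIMSEQ[OF cp])
  have z1: "singular_series h = 0 \<longleftrightarrow> (\<exists>i. degree_factor h i = 0)"
  proof
    assume "singular_series h = 0"
    hence "(\<lambda>n. \<Prod>i\<le>n. degree_factor h i) \<longlonglongrightarrow> 0" using L by (simp add: singular_series_def)
    thus "\<exists>i. degree_factor h i = 0" using convergent_prod_to_zero_iff[OF cp] by simp
  next
    assume "\<exists>i. degree_factor h i = 0"
    hence "(\<lambda>n. \<Prod>i\<le>n. degree_factor h i) \<longlonglongrightarrow> 0" using convergent_prod_to_zero_iff[OF cp] by simp
    thus "singular_series h = 0" using L LIMSEQ_unique by (simp add: singular_series_def) blast
  qed
  have z2: "degree_factor h i = 0 \<longleftrightarrow> (\<exists>P. monic_irred P \<and> degree P = i \<and> local_density h P = 0)" for i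
  proof -
    have "degree_factor h i = 0 \<longleftrightarrow> (\<exists>P\<in>{P. monic_irred P \<and> degree P = i}. local_factor h P = 0)"
      unfolding degree_factor_def using mi_finite(1) by (rule prod_zero_iff)
    also have "\<dots> \<longleftrightarrow> (\<exists>P. monic_irred P \<and> degree P = i \<and> local_density h P = 0)"
    proof -
      have "local_factor h P = 0 \<longleftrightarrow> local_density h P = 0" if "monic_irred P" for P
        using delta0_pos[OF assms(1) that] by (simp add: local_factor_def)
      thus ?thesis by auto
    qed
    finally show ?thesis .
  qed
  have p3: "singular_series h = 0 \<longleftrightarrow>
            (\<exists>P \<nu>. monic_irred P \<and> \<nu> \<ge> 1 \<and> sq_form_tuple_set h (P ^ \<nu>) = {})"
    unfolding z1 z2 using p1 by blast
  show ?thesis using p1 cp p3 by blast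
qed


end
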